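(* Let $n\ge1$ and $\beta_1,\dots,\beta_n\in\widehat{\mathbb{F}_q^\times}$ with $\beta_1\cdots\beta_n\neq\varepsilon$. Then for every $\nu\in\widehat{\mathbb{F}_q^\times}$, $$\frac{(\beta_1\cdots\beta_n)_\nu}{(\varepsilon)^\circ_\nu}=\frac{1}{(1-q)^{n-1}}\sum_{\substack{\nu_1,\dots,\nu_n\in\widehat{\mathbb{F}_q^\times}\\ \nu_1\cdots\nu_n=\nu}}\prod_{i=1}^n\frac{(\beta_i)_{\nu_i}}{(\varepsilon)^\circ_{\nu_i}}.$$
   Context: $\mathbb{F}_q$ is a finite field with $q$ elements. $\widehat{\mathbb{F}_q^\times}$ is the group of multiplicative characters $\mathbb{F}_q^\times\to\overline{\mathbb{Q}}^\times$, $\varepsilon$ the trivial character; $\delta(\eta)=1$ if $\eta=\varepsilon$, else $0$. $\psi$ is a fixed non-trivial additive character of $\mathbb{F}_q$. $g(\eta)=-\sum_{x\in\mathbb{F}_q^\times}\psi(x)\eta(x)$, $g^\circ(\eta)=q^{\delta(\eta)}g(\eta)$, $(\alpha)_\nu=g(\alpha\nu)/g(\alpha)$, $(\alpha)^\circ_\nu=g^\circ(\alpha\nu)/g^\circ(\alpha)$. *)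

theory Defs
  imports "HOL-Library.FuncSet" Complex_Main
begin

text \<open>Multiplicative characters of a finite field, extended by the convention chi 0 = 0,
  so that characters are determined by their values and pointwise products are again characters.\<close>
definition mult_char :: "('a::field \<Rightarrow> complex) \<Rightarrow> bool" where
  "mult_char \<chi> \<longleftrightarrow> \<chi> 0 = 0 \<and> \<chi> 1 = 1 \<and> (\<forall>x y. \<chi> (x * y) = \<chi> x * \<chi> y)"

definition add_char :: "('a::field \<Rightarrow> complex) \<Rightarrow> bool" where
  "add_char \<psi> \<longleftrightarrow> \<psi> 0 = 1 \<and> (\<forall>x y. \<psi> (x + y) = \<psi> x * \<psi> y)"

definition triv_char :: "'a::field \<Rightarrow> complex" where
  "triv_char = (\<lambda>x. if x = 0 then 0 else 1)"

definition char_mult :: "('a \<Rightarrow> complex) \<Rightarrow> ('a \<Rightarrow> complex) \<Rightarrow> 'a \<Rightarrow> complex" where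
  "char_mult \<alpha> \<nu> = (\<lambda>x. \<alpha> x * \<nu> x)"

definition delta_char :: "('a::field \<Rightarrow> complex) \<Rightarrow> nat" where
  "delta_char \<eta> = (if \<eta> = triv_char then 1 else 0)"

definition gauss :: "('a::{finite,field} \<Rightarrow> complex) \<Rightarrow> ('a \<Rightarrow> complex) \<Rightarrow> complex" where
  "gauss \<psi> \<eta> = - (\<Sum>x\<in>UNIV - {0}. \<psi> x * \<eta> x)"

definition gauss0 :: "('a::{finite,field} \<Rightarrow> complex) \<Rightarrow> ('a \<Rightarrow> complex) \<Rightarrow> complex" where
  "gauss0 \<psi> \<eta> = of_nat (card (UNIV :: 'a set)) ^ delta_char \<eta> * gauss \<psi> \<eta>"

definition poch :: "('a::{finite,field} \<Rightarrow> complex) \<Rightarrow> ('a \<Rightarrow> complex) \<Rightarrow> ('a \<Rightarrow> complex) \<Rightarrow> complex" where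
  "poch \<psi> \<alpha> \<nu> = gauss \<psi> (char_mult \<alpha> \<nu>) / gauss \<psi> \<alpha>"

definition poch0 :: "('a::{finite,field} \<Rightarrow> complex) \<Rightarrow> ('a \<Rightarrow> complex) \<Rightarrow> ('a \<Rightarrow> complex) \<Rightarrow> complex" where
  "poch0 \<psi> \<alpha> \<nu> = gauss0 \<psi> (char_mult \<alpha> \<nu>) / gauss0 \<psi> \<alpha>"

end

theory Submission
  imports Defs "HOL-Algebra.Algebraic_Closure_Type"
begin

lemma pow_rtta: "x [^]\<^bsub>(ring_of_type_algebra :: 'a::field ring)\<^esub> (n::nat) = x ^ n"
  by (induction n) (simp_all add: ring_of_type_algebra_def mult.commute)

lemma field_gen_ord:
  "\<exists>(a::'a::{finite,field}) d. d > 0 \<and> a \<noteq> 0 \<and> (\<forall>x. x \<noteq> 0 \<longrightarrow> (\<exists>i::nat. x = a^i))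
      \<and> (\<forall>n. a^n = 1 \<longleftrightarrow> d dvd n)"
proof -
  let ?R = "ring_of_type_algebra :: 'a ring"
  interpret F: field ?R by (rule field_from_type_algebra)
  have fin: "finite (carrier ?R)" by (simp add: ring_of_type_algebra_def)
  obtain a where a: "a \<in> carrier (Multiplicative_Group.mult_of ?R)"
    and gen: "carrier (Multiplicative_Group.mult_of ?R) = {a [^]\<^bsub>?R\<^esub> i | i::nat. i \<in> UNIV}"
    using F.finite_field_mult_group_has_gen[OF fin] by (elim bexE)
  interpret G: group "Multiplicative_Group.mult_of ?R" by (rule F.field_mult_group)
  have cm: "carrier (Multiplicative_Group.mult_of ?R) = UNIV - {0}" by (simp add: ring_of_type_algebra_def)
  have pw: "a [^]\<^bsub>Multiplicative_Group.mult_of ?R\<^esub> (i::nat) = a ^ i" for i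
    by (simp add: Multiplicative_Group.nat_pow_mult_of pow_rtta)
  have one: "\<one>\<^bsub>Multiplicative_Group.mult_of ?R\<^esub> = (1::'a)" by (simp add: ring_of_type_algebra_def)
  have finG: "finite (carrier (Multiplicative_Group.mult_of ?R))" by (simp add: cm)
  have 1: "G.ord a > 0" using G.ord_ge_1[OF finG a] by simp
  have 2: "a \<noteq> 0" using a cm by auto
  have 3: "\<exists>i. x = a ^ i" if "x \<noteq> 0" for x
  proof -
    have "x \<in> carrier (Multiplicative_Group.mult_of ?R)" using cm that by auto
    then show ?thesis using gen by (auto simp: pow_rtta)
  qed
  have 4: "a ^ n = 1 \<longleftrightarrow> G.ord a dvd n" for n using G.pow_eq_id[OF a, of n] pw one by simp
  show ?thesis using 1 2 3 4 by blast
qed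

lemma pow_mod_period:
  fixes z :: "'b::comm_monoid_mult"
  assumes "z ^ d = 1" shows "z ^ k = z ^ (k mod d)"
proof -
  have "z ^ k = z ^ (d * (k div d) + k mod d)" by simp
  also have "\<dots> = (z ^ d) ^ (k div d) * z ^ (k mod d)" by (simp only: power_add power_mult)
  finally show ?thesis using assms by simp
qed

lemma cis_root_pow_eq_1:
  assumes "d > 0"
  shows "cis (2 * pi / real d) ^ k = 1 \<longleftrightarrow> d dvd k"
proof -
  let ?z = "cis (2 * pi / real d)"
  have pk: "?z ^ m = cis (2 * pi * real m / real d)" for m
    by (simp add: DeMoivre mult_ac)
  have zd: "?z ^ d = 1" using assms by (simp add: pk)
  have inj: "inj_on (\<lambda>k. cis (2 * pi * real k / real d)) {..<d}"
    using bij_betw_roots_unity[OF assms] by (simp add: bij_betw_def)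
  show ?thesis
  proof
    assume "?z ^ k = 1"
    then have "?z ^ (k mod d) = ?z ^ 0" using pow_mod_period[OF zd, of k] by simp
    then have "cis (2 * pi * real (k mod d) / real d) = cis (2 * pi * real 0 / real d)"
      by (simp only: pk)
    then have "k mod d = 0" using inj_onD[OF inj] assms by auto
    then show "d dvd k" by auto
  next
    assume "d dvd k"
    then show "?z ^ k = 1" using pow_mod_period[OF zd, of k] by simp
  qed
qed

lemma pow_eq_iff_dvd_diff:
  fixes z :: "'b::field"
  assumes "z \<noteq> 0" and "\<And>n. z ^ n = 1 \<longleftrightarrow> d dvd n" and "i \<le> j"
  shows "z ^ i = z ^ j \<longleftrightarrow> d dvd (j - i)"
proof -
  have "z ^ j = z ^ i * z ^ (j - i)" using assms(3) by (simp add: power_add[symmetric])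
  then have "z ^ i = z ^ j \<longleftrightarrow> z ^ (j - i) = 1" using assms(1) by auto
  then show ?thesis using assms(2) by simp
qed

lemma char_sep:
  fixes t :: "'a::{finite,field}"
  assumes "t \<noteq> 0" "t \<noteq> 1"
  shows "\<exists>\<chi>. mult_char \<chi> \<and> \<chi> t \<noteq> 1"
proof -
  obtain a :: 'a and d :: nat where d: "d > 0" and a0: "a \<noteq> 0"
    and gen: "\<And>x. x \<noteq> 0 \<Longrightarrow> \<exists>i::nat. x = a^i" and ord: "\<And>n. a^n = 1 \<longleftrightarrow> d dvd n"
    using field_gen_ord by blast
  define z where "z = cis (2 * pi / real d)"
  have z0: "z \<noteq> 0" by (simp add: z_def)
  have zord: "z ^ n = 1 \<longleftrightarrow> d dvd n" for n unfolding z_def using cis_root_pow_eq_1[OF d] .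
  have key: "a ^ i = a ^ j \<longleftrightarrow> z ^ i = z ^ j" for i j
  proof (cases "i \<le> j")
    case True
    then show ?thesis using pow_eq_iff_dvd_diff[OF a0 ord True] pow_eq_iff_dvd_diff[OF z0 zord True] by simp
  next
    case False
    then have "j \<le> i" by simp
    then show ?thesis using pow_eq_iff_dvd_diff[OF a0 ord, of j i] pow_eq_iff_dvd_diff[OF z0 zord, of j i] by auto
  qed
  define ind where "ind x = (SOME i::nat. x = a ^ i)" for x
  have ind: "x = a ^ ind x" if "x \<noteq> 0" for x
    unfolding ind_def using someI_ex[OF gen[OF that]] .
  define \<chi> where "\<chi> x = (if x = 0 then 0 else z ^ ind x)" for x
  have mc: "mult_char \<chi>"
    unfolding mult_char_def
  proof (intro conjI allI)
    show "\<chi> 0 = 0" by (simp add: \<chi>_def)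
    have "a ^ ind 1 = a ^ 0" using ind[of 1] by simp
    then show "\<chi> 1 = 1" unfolding \<chi>_def key by simp
    fix x y :: 'a
    show "\<chi> (x * y) = \<chi> x * \<chi> y"
    proof (cases "x = 0 \<or> y = 0")
      case True then show ?thesis by (auto simp: \<chi>_def)
    next
      case False
      then have "x * y \<noteq> 0" by simp
      have "a ^ ind (x * y) = a ^ (ind x + ind y)"
        using ind[OF \<open>x * y \<noteq> 0\<close>] ind[of x] ind[of y] False by (simp add: power_add)
      then have "z ^ ind (x * y) = z ^ (ind x + ind y)" unfolding key .
      then show ?thesis using False \<open>x * y \<noteq> 0\<close> by (simp add: \<chi>_def power_add)
    qed
  qed
  have "\<chi> t \<noteq> 1"
  proof
    assume "\<chi> t = 1"
    then have "z ^ ind t = z ^ 0" using assms(1) by (simp add: \<chi>_def)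
    then have "a ^ ind t = a ^ 0" unfolding key .
    then show False using ind[OF assms(1)] assms(2) by simp
  qed
  then show ?thesis using mc by blast
qed


lemma mc_simps:
  assumes "mult_char \<chi>"
  shows "\<chi> 0 = 0" "\<chi> 1 = 1" "\<chi> (x * y) = \<chi> x * \<chi> y"
  using assms by (auto simp: mult_char_def)

lemma mc_inv_mult:
  assumes "mult_char \<chi>" "(x::'a::field) \<noteq> 0"
  shows "\<chi> (inverse x) * \<chi> x = 1"
proof -
  have "\<chi> (inverse x * x) = 1" using assms by (simp add: mc_simps)
  then show ?thesis using mc_simps(3)[OF assms(1)] by metis
qed

lemma mc_nz:
  assumes "mult_char \<chi>" "(x::'a::field) \<noteq> 0"
  shows "\<chi> x \<noteq> 0"
  using mc_inv_mult[OF assms] by auto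

lemma mc_pow:
  assumes "mult_char \<chi>"
  shows "\<chi> (x ^ n) = \<chi> x ^ n"
  by (induction n) (simp_all add: mc_simps[OF assms])

lemma mc_mult:
  assumes "mult_char \<chi>" "mult_char \<mu>"
  shows "mult_char (\<lambda>x. \<chi> x * \<mu> x)"
  using assms unfolding mult_char_def by (auto simp: mult_ac)

lemma mc_invc:
  assumes "mult_char (\<chi> :: 'a::field \<Rightarrow> complex)"
  shows "mult_char (\<lambda>x. \<chi> (inverse x))"
  using assms unfolding mult_char_def by (auto simp: inverse_mult_distrib)

lemma mc_triv: "mult_char (triv_char :: 'a::field \<Rightarrow> complex)"
  unfolding mult_char_def triv_char_def by auto

lemma mc_prod:
  fixes n :: nat
  assumes "\<forall>i<n. mult_char (\<beta> i)" "n \<ge> 1"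
  shows "mult_char (\<lambda>x. \<Prod>i<n. \<beta> i x)"
  using assms
proof (induction n)
  case 0 then show ?case by simp
next
  case (Suc n)
  show ?case
  proof (cases "n = 0")
    case True
    then show ?thesis using Suc.prems by simp
  next
    case False
    then have "mult_char (\<lambda>x. \<Prod>i<n. \<beta> i x)" using Suc by simp
    then show ?thesis using mc_mult[of "\<lambda>x. \<Prod>i<n. \<beta> i x" "\<beta> n"] Suc.prems by simp
  qed
qed

lemma mc_neg1:
  assumes "mult_char (\<chi> :: 'a::field \<Rightarrow> complex)"
  shows "\<chi> (-1) * \<chi> (-1) = 1"
  using mc_simps(3)[OF assms, of "-1" "-1"] mc_simps(2)[OF assms] by simp

definition chars :: "('a::{finite,field} \<Rightarrow> complex) set" where
  "chars = {\<chi>. mult_char \<chi>}"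

lemma finite_chars: "finite (chars :: ('a::{finite,field} \<Rightarrow> complex) set)"
proof -
  obtain a :: 'a and d :: nat where d: "d > 0" and a0: "a \<noteq> 0"
    and gen: "\<And>x. x \<noteq> 0 \<Longrightarrow> \<exists>i::nat. x = a^i" and ord: "\<And>n. a^n = 1 \<longleftrightarrow> d dvd n"
    using field_gen_ord by blast
  let ?R = "insert 0 {z::complex. z ^ d = 1}"
  have finR: "finite ?R" using finite_roots_unity[of d] d by simp
  have "(chars :: ('a \<Rightarrow> complex) set) \<subseteq> Pi\<^sub>E (UNIV::'a set) (\<lambda>_. ?R)"
  proof
    fix \<chi> :: "'a \<Rightarrow> complex" assume "\<chi> \<in> chars"
    then have mc: "mult_char \<chi>" by (simp add: chars_def)
    have "\<chi> x \<in> ?R" for x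
    proof (cases "x = 0")
      case True then show ?thesis by (simp add: mc_simps[OF mc])
    next
      case False
      then obtain i where "x = a ^ i" using gen by blast
      then have "\<chi> x ^ d = \<chi> ((a ^ d) ^ i)" by (simp add: mc_pow[OF mc] power_mult[symmetric] mult.commute)
      then show ?thesis using ord[of d] by (simp add: mc_simps[OF mc])
    qed
    then show "\<chi> \<in> Pi\<^sub>E UNIV (\<lambda>_. ?R)" by (simp add: PiE_UNIV_domain)
  qed
  moreover have "finite (Pi\<^sub>E (UNIV::'a set) (\<lambda>_. ?R))" by (intro finite_PiE finR) auto
  ultimately show ?thesis by (rule finite_subset)
qed

lemma sum_char:
  assumes "mult_char (\<chi> :: 'a::{finite,field} \<Rightarrow> complex)"
  shows "(\<Sum>x\<in>UNIV - {0}. \<chi> x) = (if \<chi> = triv_char then of_nat (card (UNIV::'a set)) - 1 else 0)"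
proof (cases "\<chi> = triv_char")
  case True
  have "(\<Sum>x\<in>UNIV - {0}. \<chi> x) = (\<Sum>x\<in>UNIV - {0::'a}. 1)"
    by (rule sum.cong) (auto simp: True triv_char_def)
  also have "\<dots> = of_nat (card (UNIV::'a set)) - 1"
    using card_gt_0_iff[of "UNIV::'a set"] by (simp add: card_Diff_subset of_nat_diff)
  finally show ?thesis using True by simp
next
  case False
  then obtain b where b: "\<chi> b \<noteq> triv_char b" by auto
  have b0: "b \<noteq> 0" using b mc_simps[OF assms] by (auto simp: triv_char_def)
  then have b1: "\<chi> b \<noteq> 1" using b by (simp add: triv_char_def)
  have "(\<Sum>x\<in>UNIV - {0}. \<chi> x) = (\<Sum>x\<in>UNIV - {0}. \<chi> (b * x))"
    by (rule sum.reindex_bij_witness[where j = "\<lambda>x. x / b" and i = "\<lambda>x. b * x"]) (auto simp: b0)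
  also have "\<dots> = \<chi> b * (\<Sum>x\<in>UNIV - {0}. \<chi> x)"
    by (simp add: mc_simps[OF assms] sum_distrib_left)
  finally have "(1 - \<chi> b) * (\<Sum>x\<in>UNIV - {0}. \<chi> x) = 0" by (simp add: algebra_simps)
  then show ?thesis using b1 False by simp
qed

lemma sum_chars_aux:
  fixes s :: "'a::{finite,field}"
  assumes "s \<noteq> 0"
  shows "(\<Sum>\<chi>\<in>chars. \<chi> s) = (if s = 1 then of_nat (card (chars :: ('a \<Rightarrow> complex) set)) else 0)"
proof (cases "s = 1")
  case True
  then show ?thesis by (simp add: chars_def mult_char_def)
next
  case False
  obtain \<chi>0 :: "'a \<Rightarrow> complex" where c0: "mult_char \<chi>0" "\<chi>0 s \<noteq> 1"
    using char_sep[OF assms False] by blast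
  have "(\<Sum>\<chi>\<in>chars. \<chi> s) = (\<Sum>\<chi>\<in>chars. (\<lambda>x. \<chi>0 x * \<chi> x) s)"
  proof (rule sum.reindex_bij_witness[where j = "\<lambda>\<chi> x. \<chi>0 (inverse x) * \<chi> x" and i = "\<lambda>\<chi> x. \<chi>0 x * \<chi> x"])
    fix \<chi> :: "'a \<Rightarrow> complex" assume "\<chi> \<in> chars"
    then have mc: "mult_char \<chi>" by (simp add: chars_def)
    show "(\<lambda>x. \<chi>0 (inverse x) * (\<chi>0 x * \<chi> x)) = \<chi>"
    proof
      fix x show "\<chi>0 (inverse x) * (\<chi>0 x * \<chi> x) = \<chi> x"
        using mc_inv_mult[OF c0(1), of x] mc_simps[OF mc] by (cases "x = 0") (auto simp: mult.assoc[symmetric])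
    qed
    show "(\<lambda>x. \<chi>0 x * (\<chi>0 (inverse x) * \<chi> x)) = \<chi>"
    proof
      fix x show "\<chi>0 x * (\<chi>0 (inverse x) * \<chi> x) = \<chi> x"
        using mc_inv_mult[OF c0(1), of x] mc_simps[OF mc] by (cases "x = 0") (auto simp: algebra_simps)
    qed
    show "(\<lambda>x. \<chi>0 x * \<chi> x) \<in> chars" using mc_mult[OF c0(1) mc] by (simp add: chars_def)
    show "(\<lambda>x. \<chi>0 (inverse x) * \<chi> x) \<in> chars" using mc_mult[OF mc_invc[OF c0(1)] mc] by (simp add: chars_def)
    have inv: "\<chi>0 s * \<chi>0 (inverse s) = 1" using mc_inv_mult[OF c0(1) assms] by (simp add: mult.commute)
    show "\<chi>0 s * (\<chi>0 (inverse s) * \<chi> s) = \<chi> s" by (simp add: mult.assoc[symmetric] inv)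
  qed
  also have "\<dots> = \<chi>0 s * (\<Sum>\<chi>\<in>chars. \<chi> s)" by (simp add: sum_distrib_left)
  finally have "(1 - \<chi>0 s) * (\<Sum>\<chi>\<in>chars. \<chi> s) = 0" by (simp add: algebra_simps)
  then show ?thesis using c0(2) False by simp
qed

lemma card_chars: "of_nat (card (chars :: ('a::{finite,field} \<Rightarrow> complex) set)) = (of_nat (card (UNIV::'a set)) - 1 :: complex)"
proof -
  have "(\<Sum>\<chi>\<in>(chars :: ('a \<Rightarrow> complex) set). \<Sum>x\<in>UNIV - {0}. \<chi> x)
      = (\<Sum>\<chi>\<in>(chars :: ('a \<Rightarrow> complex) set). if \<chi> = triv_char then of_nat (card (UNIV::'a set)) - 1 else 0)"
    by (intro sum.cong refl) (simp add: sum_char chars_def)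
  also have "\<dots> = of_nat (card (UNIV::'a set)) - 1"
    by (subst sum.delta[OF finite_chars]) (simp add: chars_def mc_triv)
  finally have 1: "(\<Sum>\<chi>\<in>(chars :: ('a \<Rightarrow> complex) set). \<Sum>x\<in>UNIV - {0}. \<chi> x) = of_nat (card (UNIV::'a set)) - 1" .
  have "(\<Sum>\<chi>\<in>(chars :: ('a \<Rightarrow> complex) set). \<Sum>x\<in>UNIV - {0}. \<chi> x)
     = (\<Sum>x\<in>UNIV - {0::'a}. \<Sum>\<chi>\<in>chars. \<chi> x)" by (rule sum.swap)
  also have "\<dots> = (\<Sum>x\<in>UNIV - {0::'a}. if x = 1 then of_nat (card (chars :: ('a \<Rightarrow> complex) set)) else 0)"
    by (intro sum.cong refl) (simp add: sum_chars_aux)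
  also have "\<dots> = of_nat (card (chars :: ('a \<Rightarrow> complex) set))" by (simp add: sum.delta)
  finally show ?thesis using 1 by simp
qed

lemma sum_chars:
  fixes s :: "'a::{finite,field}"
  assumes "s \<noteq> 0"
  shows "(\<Sum>\<chi>\<in>chars. \<chi> s) = (if s = 1 then of_nat (card (UNIV::'a set)) - 1 else (0::complex))"
  using sum_chars_aux[OF assms] card_chars by auto


lemma ac_simps:
  assumes "add_char \<psi>"
  shows "\<psi> 0 = 1" "\<psi> (x + y) = \<psi> x * \<psi> y"
  using assms by (auto simp: add_char_def)

lemma sum_psi_all:
  fixes \<psi> :: "'a::{finite,field} \<Rightarrow> complex"
  assumes "add_char \<psi>" "\<psi> \<noteq> (\<lambda>_. 1)"
  shows "(\<Sum>x\<in>UNIV. \<psi> x) = 0"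
proof -
  obtain b where b: "\<psi> b \<noteq> 1" using assms(2) by auto
  have "(\<Sum>x\<in>UNIV. \<psi> x) = (\<Sum>x\<in>UNIV. \<psi> (x + b))"
    by (rule sum.reindex_bij_witness[where j = "\<lambda>x. x - b" and i = "\<lambda>x. x + b"]) auto
  also have "\<dots> = \<psi> b * (\<Sum>x\<in>UNIV. \<psi> x)"
    by (simp add: ac_simps[OF assms(1)] sum_distrib_left mult.commute)
  finally have "(1 - \<psi> b) * (\<Sum>x\<in>UNIV. \<psi> x) = 0" by (simp add: algebra_simps)
  then show ?thesis using b by simp
qed

lemma sum_psi_F:
  fixes \<psi> :: "'a::{finite,field} \<Rightarrow> complex"
  assumes "add_char \<psi>" "\<psi> \<noteq> (\<lambda>_. 1)"
  shows "(\<Sum>x\<in>UNIV - {0}. \<psi> (c * x)) = (if c = 0 then of_nat (card (UNIV::'a set)) - 1 else -1)"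
proof (cases "c = 0")
  case True
  then show ?thesis
    using card_gt_0_iff[of "UNIV::'a set"] by (simp add: ac_simps[OF assms(1)] card_Diff_subset of_nat_diff)
next
  case False
  have "(\<Sum>x\<in>UNIV - {0}. \<psi> (c * x)) = (\<Sum>x\<in>UNIV - {0}. \<psi> x)"
    by (rule sum.reindex_bij_witness[where i = "\<lambda>x. x / c" and j = "\<lambda>x. c * x"]) (auto simp: False)
  also have "\<dots> = (\<Sum>x\<in>UNIV. \<psi> x) - \<psi> 0"
    by (simp add: sum_diff1)
  also have "\<dots> = -1" using sum_psi_all[OF assms] ac_simps[OF assms(1)] by simp
  finally show ?thesis using False by simp
qed

lemma triv_inv: "(\<lambda>x. triv_char (inverse x)) = (triv_char :: 'a::field \<Rightarrow> complex)"
  by (auto simp: triv_char_def)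

lemma gauss_triv:
  fixes \<psi> :: "'a::{finite,field} \<Rightarrow> complex"
  assumes "add_char \<psi>" "\<psi> \<noteq> (\<lambda>_. 1)"
  shows "gauss \<psi> triv_char = 1"
proof -
  have "(\<Sum>x\<in>UNIV - {0}. \<psi> x * triv_char x) = (\<Sum>x\<in>UNIV - {0}. \<psi> (1 * x))"
    by (intro sum.cong refl) (simp add: triv_char_def)
  then show ?thesis using sum_psi_F[OF assms, of 1] by (simp add: gauss_def)
qed

lemma gauss0_triv:
  fixes \<psi> :: "'a::{finite,field} \<Rightarrow> complex"
  assumes "add_char \<psi>" "\<psi> \<noteq> (\<lambda>_. 1)"
  shows "gauss0 \<psi> triv_char = of_nat (card (UNIV::'a set))"
  using gauss_triv[OF assms] by (simp add: gauss0_def delta_char_def)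

lemma gauss_H:
  fixes \<psi> :: "'a::{finite,field} \<Rightarrow> complex"
  assumes "add_char \<psi>" "\<psi> \<noteq> (\<lambda>_. 1)" "mult_char \<chi>"
  shows "gauss0 \<psi> \<chi> * gauss \<psi> (\<lambda>x. \<chi> (inverse x)) = \<chi> (-1) * of_nat (card (UNIV::'a set))"
proof (cases "\<chi> = triv_char")
  case True
  then show ?thesis using gauss0_triv[OF assms(1,2)] gauss_triv[OF assms(1,2)]
    by (simp add: triv_inv triv_char_def)
next
  case False
  let ?F = "UNIV - {0::'a}"
  let ?q = "of_nat (card (UNIV::'a set)) :: complex"
  have "gauss0 \<psi> \<chi> * gauss \<psi> (\<lambda>x. \<chi> (inverse x))
      = (\<Sum>x\<in>?F. \<psi> x * \<chi> x) * (\<Sum>y\<in>?F. \<psi> y * \<chi> (inverse y))"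
    using False by (simp add: gauss0_def gauss_def delta_char_def)
  also have "\<dots> = (\<Sum>y\<in>?F. \<Sum>x\<in>?F. \<psi> x * \<chi> x * (\<psi> y * \<chi> (inverse y)))"
    by (subst sum_product) (rule sum.swap)
  also have "\<dots> = (\<Sum>y\<in>?F. \<Sum>t\<in>?F. \<chi> t * \<psi> ((t + 1) * y))"
  proof (rule sum.cong[OF refl])
    fix y assume y: "y \<in> ?F"
    have eq: "\<psi> (t * y) * \<chi> (t * y) * (\<psi> y * \<chi> (inverse y)) = \<chi> t * \<psi> ((t + 1) * y)" for t
    proof -
      have "\<psi> (t * y) * \<chi> (t * y) * (\<psi> y * \<chi> (inverse y)) = \<chi> t * (\<chi> y * \<chi> (inverse y)) * (\<psi> (t * y) * \<psi> y)"
        by (simp add: mc_simps[OF assms(3)] mult_ac)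
      also have "\<dots> = \<chi> t * \<psi> ((t + 1) * y)"
      proof -
        have "\<psi> ((t + 1) * y) = \<psi> (t * y) * \<psi> y" by (simp add: distrib_right ac_simps[OF assms(1)])
        moreover have "\<chi> (inverse y) * \<chi> y = 1" using mc_inv_mult[OF assms(3), of y] y by simp
        ultimately show ?thesis by (simp add: mult.commute)
      qed
      finally show ?thesis .
    qed
    show "(\<Sum>x\<in>?F. \<psi> x * \<chi> x * (\<psi> y * \<chi> (inverse y))) = (\<Sum>t\<in>?F. \<chi> t * \<psi> ((t + 1) * y))"
      by (rule sym, rule sum.reindex_bij_witness[where i = "\<lambda>x. x / y" and j = "\<lambda>t. t * y"]) (use y eq in auto)
  qed
  also have "\<dots> = (\<Sum>t\<in>?F. \<chi> t * (\<Sum>y\<in>?F. \<psi> ((t + 1) * y)))"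
    by (subst sum.swap) (simp add: sum_distrib_left)
  also have "\<dots> = (\<Sum>t\<in>?F. \<chi> t * (if t + 1 = 0 then ?q - 1 else -1))"
    by (intro sum.cong refl) (simp add: sum_psi_F[OF assms(1,2)])
  also have "\<dots> = (\<Sum>t\<in>?F. \<chi> t * (if t = -1 then ?q else 0)) - (\<Sum>t\<in>?F. \<chi> t)"
    unfolding sum_subtractf[symmetric]
  proof (intro sum.cong refl)
    fix t :: 'a
    show "\<chi> t * (if t + 1 = 0 then ?q - 1 else -1) = \<chi> t * (if t = -1 then ?q else 0) - \<chi> t"
    proof (cases "t = -1")
      case True then show ?thesis by (simp add: algebra_simps)
    next
      case False
      then have "t + 1 \<noteq> 0" by (simp add: eq_neg_iff_add_eq_0)
      then show ?thesis using False by simp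
    qed
  qed
  also have "\<dots> = \<chi> (-1) * ?q"
    using sum_char[OF assms(3)] False by (simp add: if_distrib sum.delta cong: if_cong)
  finally show ?thesis .
qed


lemma inner_J:
  fixes \<psi> :: "'a::{finite,field} \<Rightarrow> complex"
  assumes "add_char \<psi>" "\<psi> \<noteq> (\<lambda>_. 1)" "mult_char \<beta>" "t \<noteq> 0"
  shows "(\<Sum>x\<in>UNIV - {0}. \<psi> ((1 - inverse t) * x) * \<beta> x)
     = (if t = 1 then (of_nat (card (UNIV::'a set)) - 1) * of_nat (delta_char \<beta>) else 0) - gauss \<psi> \<beta> * \<beta> (t / (t - 1))"
proof (cases "t = 1")
  case True
  have "(\<Sum>x\<in>UNIV - {0}. \<psi> ((1 - inverse t) * x) * \<beta> x) = (\<Sum>x\<in>UNIV - {0}. \<beta> x)"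
    using True by (simp add: ac_simps[OF assms(1)])
  also have "\<dots> = (of_nat (card (UNIV::'a set)) - 1) * of_nat (delta_char \<beta>)"
    using sum_char[OF assms(3)] by (simp add: delta_char_def)
  finally show ?thesis using True by (simp add: mc_simps[OF assms(3)])
next
  case False
  define c where "c = 1 - inverse t"
  have c0: "c \<noteq> 0" using False assms(4) by (auto simp: c_def field_simps)
  have "(\<Sum>x\<in>UNIV - {0}. \<psi> (c * x) * \<beta> x) = (\<Sum>u\<in>UNIV - {0}. \<psi> u * \<beta> (u * inverse c))"
    by (rule sum.reindex_bij_witness[where j = "\<lambda>x. c * x" and i = "\<lambda>u. u / c"]) (auto simp: c0 field_simps)
  also have "\<dots> = \<beta> (inverse c) * (\<Sum>u\<in>UNIV - {0}. \<psi> u * \<beta> u)"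
    by (simp add: mc_simps[OF assms(3)] sum_distrib_left mult_ac)
  also have "\<dots> = - gauss \<psi> \<beta> * \<beta> (t / (t - 1))"
  proof -
    have "inverse c = t / (t - 1)" using False assms(4) by (simp add: c_def field_simps)
    then show ?thesis by (simp add: gauss_def)
  qed
  finally show ?thesis using False by (simp add: c_def)
qed

lemma mellin:
  fixes \<psi> :: "'a::{finite,field} \<Rightarrow> complex"
  assumes "add_char \<psi>" "\<psi> \<noteq> (\<lambda>_. 1)" "mult_char \<beta>" "mult_char \<nu>"
  shows "\<nu> (-1) * gauss \<psi> (char_mult \<beta> \<nu>) * gauss \<psi> (\<lambda>x. \<nu> (inverse x))
     = (of_nat (card (UNIV::'a set)) - 1) * of_nat (delta_char \<beta>) - gauss \<psi> \<beta> * (\<Sum>t\<in>UNIV - {0}. \<nu> t * \<beta> (t / (t - 1)))"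
proof -
  let ?F = "UNIV - {0::'a}"
  let ?q = "of_nat (card (UNIV::'a set)) :: complex"
  have "\<nu> (-1) * gauss \<psi> (char_mult \<beta> \<nu>) * gauss \<psi> (\<lambda>x. \<nu> (inverse x))
      = \<nu> (-1) * ((\<Sum>x\<in>?F. \<psi> x * (\<beta> x * \<nu> x)) * (\<Sum>y\<in>?F. \<psi> y * \<nu> (inverse y)))"
    by (simp add: gauss_def char_mult_def)
  also have "\<dots> = (\<Sum>x\<in>?F. \<Sum>y\<in>?F. \<nu> (-1) * (\<psi> x * (\<beta> x * \<nu> x)) * (\<psi> y * \<nu> (inverse y)))"
    by (subst sum_product) (simp add: sum_distrib_left mult.assoc)
  also have "\<dots> = (\<Sum>x\<in>?F. \<Sum>t\<in>?F. \<nu> t * (\<psi> ((1 - inverse t) * x) * \<beta> x))"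
  proof (rule sum.cong[OF refl])
    fix x assume x: "x \<in> ?F"
    have eq: "\<nu> (-1) * (\<psi> x * (\<beta> x * \<nu> x)) * (\<psi> (- x / t) * \<nu> (inverse (- x / t)))
        = \<nu> t * (\<psi> ((1 - inverse t) * x) * \<beta> x)" if t: "t \<in> ?F" for t
    proof -
      have i0: "inverse (- x / t) = (-1) * (t * inverse x)" using x t by (simp add: field_simps)
      have i: "\<nu> (inverse (- x / t)) = \<nu> (-1) * (\<nu> t * \<nu> (inverse x))"
        unfolding i0 by (simp only: mc_simps(3)[OF assms(4)])
      have p: "\<psi> x * \<psi> (- x / t) = \<psi> ((1 - inverse t) * x)"
      proof -
        have "(1 - inverse t) * x = x + (- x / t)" using t by (simp add: field_simps)
        then show ?thesis using ac_simps(2)[OF assms(1), of x "- x / t"] by simp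
      qed
      have n1: "\<nu> (-1) * \<nu> (-1) = 1" using mc_neg1[OF assms(4)] .
      have nx: "\<nu> (inverse x) * \<nu> x = 1" using mc_inv_mult[OF assms(4)] x by simp
      have "\<nu> (-1) * (\<psi> x * (\<beta> x * \<nu> x)) * (\<psi> (- x / t) * \<nu> (inverse (- x / t)))
          = (\<nu> (-1) * \<nu> (-1)) * (\<nu> (inverse x) * \<nu> x) * \<nu> t * ((\<psi> x * \<psi> (- x / t)) * \<beta> x)"
        unfolding i by (simp add: mc_simps[OF assms(4)] mult_ac)
      also have "\<dots> = \<nu> t * (\<psi> ((1 - inverse t) * x) * \<beta> x)" by (simp only: n1 nx p mult_1 mult_1_left)
      finally show ?thesis .
    qed
    show "(\<Sum>y\<in>?F. \<nu> (-1) * (\<psi> x * (\<beta> x * \<nu> x)) * (\<psi> y * \<nu> (inverse y)))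
        = (\<Sum>t\<in>?F. \<nu> t * (\<psi> ((1 - inverse t) * x) * \<beta> x))"
      by (rule sym, rule sum.reindex_bij_witness[where j = "\<lambda>t. - x / t" and i = "\<lambda>y. - x / y"])
         (use x eq in auto)
  qed
  also have "\<dots> = (\<Sum>t\<in>?F. \<nu> t * (\<Sum>x\<in>?F. \<psi> ((1 - inverse t) * x) * \<beta> x))"
    by (subst sum.swap) (simp add: sum_distrib_left)
  also have "\<dots> = (\<Sum>t\<in>?F. \<nu> t * ((if t = 1 then (?q - 1) * of_nat (delta_char \<beta>) else 0) - gauss \<psi> \<beta> * \<beta> (t / (t - 1))))"
    by (rule sum.cong[OF refl]) (simp add: inner_J[OF assms(1-3)])
  also have "\<dots> = (\<Sum>t\<in>?F. (if t = 1 then (?q - 1) * of_nat (delta_char \<beta>) else 0)) - gauss \<psi> \<beta> * (\<Sum>t\<in>?F. \<nu> t * \<beta> (t / (t - 1)))"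
    unfolding sum_distrib_left sum_subtractf[symmetric]
    by (rule sum.cong[OF refl]) (auto simp: mc_simps[OF assms(4)] algebra_simps)
  also have "\<dots> = (?q - 1) * of_nat (delta_char \<beta>) - gauss \<psi> \<beta> * (\<Sum>t\<in>?F. \<nu> t * \<beta> (t / (t - 1)))"
    by (simp add: sum.delta)
  finally show ?thesis .
qed

definition kf :: "('a::{finite,field} \<Rightarrow> complex) \<Rightarrow> 'a \<Rightarrow> complex" where
  "kf \<beta> t = (if t = 1 then (of_nat (card (UNIV::'a set)) - 1) * of_nat (delta_char \<beta>) else 0) - \<beta> (t / (t - 1))"

lemma gauss_nz:
  fixes \<psi> :: "'a::{finite,field} \<Rightarrow> complex"
  assumes "add_char \<psi>" "\<psi> \<noteq> (\<lambda>_. 1)" "mult_char \<beta>"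
  shows "gauss \<psi> \<beta> \<noteq> 0"
proof (cases "\<beta> = triv_char")
  case True then show ?thesis using gauss_triv[OF assms(1,2)] by simp
next
  case False
  have "\<beta> (-1) \<noteq> 0" using mc_nz[OF assms(3)] by simp
  then have "gauss0 \<psi> \<beta> * gauss \<psi> (\<lambda>x. \<beta> (inverse x)) \<noteq> 0"
    using gauss_H[OF assms] by simp
  then show ?thesis using False by (auto simp: gauss0_def delta_char_def)
qed

lemma gauss0_nz:
  fixes \<psi> :: "'a::{finite,field} \<Rightarrow> complex"
  assumes "add_char \<psi>" "\<psi> \<noteq> (\<lambda>_. 1)" "mult_char \<beta>"
  shows "gauss0 \<psi> \<beta> \<noteq> 0"
  using gauss_nz[OF assms] by (simp add: gauss0_def)

lemma T_formula:
  fixes \<psi> :: "'a::{finite,field} \<Rightarrow> complex"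
  assumes "add_char \<psi>" "\<psi> \<noteq> (\<lambda>_. 1)" "mult_char \<beta>" "mult_char \<nu>"
  shows "poch \<psi> \<beta> \<nu> / poch0 \<psi> triv_char \<nu> = (\<Sum>t\<in>UNIV - {0}. kf \<beta> t * \<nu> t)"
proof -
  let ?F = "UNIV - {0::'a}"
  let ?q = "of_nat (card (UNIV::'a set)) :: complex"
  define A where "A = gauss \<psi> (char_mult \<beta> \<nu>)"
  define G where "G = gauss \<psi> \<beta>"
  define G0 where "G0 = gauss0 \<psi> \<nu>"
  define Gb where "Gb = gauss \<psi> (\<lambda>x. \<nu> (inverse x))"
  define e where "e = \<nu> (-1)"
  define S where "S = (\<Sum>t\<in>?F. \<nu> t * \<beta> (t / (t - 1)))"
  define D where "D = (?q - 1) * of_nat (delta_char \<beta>)"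
  have Gnz: "G \<noteq> 0" unfolding G_def using gauss_nz[OF assms(1-3)] .
  have G0nz: "G0 \<noteq> 0" unfolding G0_def using gauss0_nz[OF assms(1,2,4)] .
  have qnz: "?q \<noteq> 0" by simp
  have H: "G0 * Gb = e * ?q" unfolding G0_def Gb_def e_def using gauss_H[OF assms(1,2,4)] .
  have ee: "e * e = 1" unfolding e_def using mc_neg1[OF assms(4)] .
  have M: "e * A * Gb = D - G * S" unfolding e_def A_def Gb_def D_def G_def S_def using mellin[OF assms] .
  have tv: "char_mult triv_char \<nu> = \<nu>"
    by (auto simp: char_mult_def triv_char_def mc_simps[OF assms(4)])
  have "poch \<psi> \<beta> \<nu> / poch0 \<psi> triv_char \<nu> = (A / G) / (G0 / ?q)"
    by (simp add: poch_def poch0_def tv gauss0_triv[OF assms(1,2)] A_def G_def G0_def)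
  also have "\<dots> = A * (?q / G0) / G" using Gnz G0nz by (simp add: field_simps)
  also have "?q / G0 = e * Gb"
  proof -
    have "G0 * (e * Gb) = e * e * ?q" using H by (simp add: mult_ac)
    then have "G0 * (e * Gb) = ?q" using ee by simp
    then show ?thesis using G0nz by (simp add: field_simps)
  qed
  also have "A * (e * Gb) / G = (D - G * S) / G" using M by (simp add: mult_ac)
  also have "\<dots> = D - S"
  proof (cases "\<beta> = triv_char")
    case True
    then have "G = 1" unfolding G_def using gauss_triv[OF assms(1,2)] by simp
    then show ?thesis by simp
  next
    case False
    then have "D = 0" by (simp add: D_def delta_char_def)
    then show ?thesis using Gnz by simp
  qed
  also have "\<dots> = (\<Sum>t\<in>?F. kf \<beta> t * \<nu> t)"
  proof -
    have "(\<Sum>t\<in>?F. kf \<beta> t * \<nu> t) = (\<Sum>t\<in>?F. (if t = 1 then D else 0)) - S"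
      unfolding S_def sum_subtractf[symmetric]
      by (rule sum.cong[OF refl]) (auto simp: kf_def D_def mc_simps[OF assms(4)] algebra_simps)
    also have "\<dots> = D - S" by (simp add: sum.delta)
    finally show ?thesis by simp
  qed
  finally show ?thesis .
qed


lemma card_ge2: "card (UNIV::'a::{finite,field} set) \<ge> 2"
proof -
  have "{0, 1::'a} \<subseteq> UNIV" by simp
  then have "card {0, 1::'a} \<le> card (UNIV::'a set)" by (intro card_mono) auto
  then show ?thesis by simp
qed

lemma Qnz: "(of_nat (card (UNIV::'a::{finite,field} set)) - 1 :: complex) \<noteq> 0"
proof
  assume "(of_nat (card (UNIV::'a set)) - 1 :: complex) = 0"
  then have "(of_nat (card (UNIV::'a set)) :: complex) = of_nat 1" by simp
  then have "card (UNIV::'a set) = 1" by (simp only: of_nat_eq_iff)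
  then show False using card_ge2[where 'a='a] by simp
qed

lemma eqchar:
  assumes "mult_char (a :: 'a::field \<Rightarrow> complex)" "mult_char b"
  shows "((\<lambda>t. a t * b (inverse t)) = triv_char) \<longleftrightarrow> a = b"
proof
  assume h: "(\<lambda>t. a t * b (inverse t)) = triv_char"
  show "a = b"
  proof
    fix t show "a t = b t"
    proof (cases "t = 0")
      case True then show ?thesis by (simp add: mc_simps[OF assms(1)] mc_simps[OF assms(2)])
    next
      case False
      have "a t * b (inverse t) = 1" using fun_cong[OF h, of t] False by (simp add: triv_char_def)
      then have "a t * b (inverse t) * b t = b t" by simp
      then show ?thesis using mc_inv_mult[OF assms(2) False] by (simp add: mult.assoc)
    qed
  qed
next
  assume "a = b"
  then show "(\<lambda>t. a t * b (inverse t)) = triv_char"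
    using mc_inv_mult[OF assms(2)] by (auto simp: triv_char_def mc_simps[OF assms(2)] mult.commute)
qed

lemma conv:
  fixes h :: "nat \<Rightarrow> 'a::{finite,field} \<Rightarrow> complex" and n :: nat
  assumes n: "n \<ge> 1" and nu: "mult_char \<nu>"
  shows "(\<Sum>\<mu>\<in>{\<mu> \<in> Pi\<^sub>E {..<n} (\<lambda>_. {\<chi>. mult_char \<chi>}). (\<lambda>x. \<Prod>i<n. \<mu> i x) = \<nu>}.
            \<Prod>i<n. \<Sum>t\<in>UNIV - {0}. h i t * \<mu> i t)
       = (of_nat (card (UNIV::'a set)) - 1) ^ (n - 1) * (\<Sum>t\<in>UNIV - {0}. (\<Prod>i<n. h i t) * \<nu> t)"
proof -
  let ?F = "UNIV - {0::'a}"
  let ?Q = "of_nat (card (UNIV::'a set)) - 1 :: complex"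
  let ?P = "Pi\<^sub>E {..<n} (\<lambda>_. (chars :: ('a \<Rightarrow> complex) set))"
  define A where "A i \<chi> = (\<Sum>t\<in>?F. h i t * \<chi> t)" for i \<chi>
  have Pfin: "finite ?P" by (intro finite_PiE finite_chars) auto
  have Pset: "Pi\<^sub>E {..<n} (\<lambda>_. {\<chi>. mult_char \<chi>}) = ?P" by (simp add: chars_def)
  have ind: "(if (\<lambda>x. \<Prod>i<n. \<mu> i x) = \<nu> then 1 else 0) = (1 / ?Q) * (\<Sum>t\<in>?F. (\<Prod>i<n. \<mu> i t) * \<nu> (inverse t))"
    if "\<mu> \<in> ?P" for \<mu>
  proof -
    have m: "\<forall>i<n. mult_char (\<mu> i)" using that by (auto simp: chars_def)
    have mp: "mult_char (\<lambda>x. \<Prod>i<n. \<mu> i x)" using mc_prod[OF m n] .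
    have "(\<Sum>t\<in>?F. (\<Prod>i<n. \<mu> i t) * \<nu> (inverse t)) = (if (\<lambda>x. \<Prod>i<n. \<mu> i x) = \<nu> then ?Q else 0)"
      using sum_char[OF mc_mult[OF mp mc_invc[OF nu]]] eqchar[OF mp nu] by simp
    then show ?thesis using Qnz[where 'a='a] by simp
  qed
  have "(\<Sum>\<mu>\<in>{\<mu> \<in> Pi\<^sub>E {..<n} (\<lambda>_. {\<chi>. mult_char \<chi>}). (\<lambda>x. \<Prod>i<n. \<mu> i x) = \<nu>}. \<Prod>i<n. A i (\<mu> i))
      = (\<Sum>\<mu>\<in>?P. (if (\<lambda>x. \<Prod>i<n. \<mu> i x) = \<nu> then 1 else 0) * (\<Prod>i<n. A i (\<mu> i)))"
    unfolding Pset sum.inter_filter[OF Pfin] by (intro sum.cong refl) simp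
  also have "\<dots> = (\<Sum>\<mu>\<in>?P. (1 / ?Q) * (\<Sum>t\<in>?F. (\<Prod>i<n. \<mu> i t) * \<nu> (inverse t)) * (\<Prod>i<n. A i (\<mu> i)))"
    by (rule sum.cong[OF refl]) (simp add: ind)
  also have "\<dots> = (1 / ?Q) * (\<Sum>t\<in>?F. \<nu> (inverse t) * (\<Sum>\<mu>\<in>?P. \<Prod>i<n. A i (\<mu> i) * \<mu> i t))"
    by (simp add: sum_distrib_left sum_distrib_right prod.distrib mult_ac sum.swap[of _ ?P])
  also have "\<dots> = (1 / ?Q) * (\<Sum>t\<in>?F. \<nu> (inverse t) * (\<Prod>i<n. \<Sum>\<chi>\<in>chars. A i \<chi> * \<chi> t))"
    by (simp add: prod_sum_PiE[OF _ finite_chars])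
  also have "\<dots> = (1 / ?Q) * (\<Sum>t\<in>?F. \<nu> (inverse t) * (\<Prod>i<n. ?Q * h i (inverse t)))"
  proof -
    have "(\<Sum>\<chi>\<in>chars. A i \<chi> * \<chi> t) = ?Q * h i (inverse t)" if t: "t \<in> ?F" for i t
    proof -
      have "(\<Sum>\<chi>\<in>chars. A i \<chi> * \<chi> t) = (\<Sum>s\<in>?F. h i s * (\<Sum>\<chi>\<in>chars. \<chi> (s * t)))"
      proof -
        have "(\<Sum>\<chi>\<in>chars. A i \<chi> * \<chi> t) = (\<Sum>\<chi>\<in>chars. \<Sum>s\<in>?F. h i s * \<chi> (s * t))"
          by (rule sum.cong[OF refl]) (auto simp: A_def sum_distrib_right chars_def mc_simps mult.assoc)
        also have "\<dots> = (\<Sum>s\<in>?F. h i s * (\<Sum>\<chi>\<in>chars. \<chi> (s * t)))"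
          by (subst sum.swap) (simp add: sum_distrib_left)
        finally show ?thesis .
      qed
      also have "\<dots> = (\<Sum>s\<in>?F. if s = inverse t then ?Q * h i s else 0)"
      proof (rule sum.cong[OF refl])
        fix s assume s: "s \<in> ?F"
        have "s * t \<noteq> 0" using s t by simp
        moreover have "s * t = 1 \<longleftrightarrow> s = inverse t" using t by (auto simp: field_simps)
        ultimately show "h i s * (\<Sum>\<chi>\<in>chars. \<chi> (s * t)) = (if s = inverse t then ?Q * h i s else 0)"
          by (simp add: sum_chars)
      qed
      also have "\<dots> = ?Q * h i (inverse t)" using t by (simp add: sum.delta')
      finally show ?thesis .
    qed
    then show ?thesis by (intro arg_cong2[where f = "(*)"] refl sum.cong prod.cong) auto
  qed
  also have "\<dots> = ?Q ^ (n - 1) * (\<Sum>t\<in>?F. \<nu> (inverse t) * (\<Prod>i<n. h i (inverse t)))"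
  proof -
    have "?Q ^ n = ?Q * ?Q ^ (n - 1)" using n by (cases n) auto
    then show ?thesis using Qnz[where 'a='a]
      by (simp add: prod.distrib sum_distrib_left mult_ac)
  qed
  also have "(\<Sum>t\<in>?F. \<nu> (inverse t) * (\<Prod>i<n. h i (inverse t))) = (\<Sum>t\<in>?F. (\<Prod>i<n. h i t) * \<nu> t)"
    by (rule sum.reindex_bij_witness[where i = inverse and j = inverse]) (auto simp: mult.commute)
  finally show ?thesis by (simp add: A_def)
qed


lemma kf_prod:
  fixes \<beta> :: "nat \<Rightarrow> 'a::{finite,field} \<Rightarrow> complex" and n :: nat
  assumes n: "n \<ge> 1" and b: "\<forall>i<n. mult_char (\<beta> i)"
    and B: "(\<lambda>x. \<Prod>i<n. \<beta> i x) \<noteq> triv_char"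
  shows "kf (\<lambda>x. \<Prod>i<n. \<beta> i x) t = (-1) ^ (n - 1) * (\<Prod>i<n. kf (\<beta> i) t)"
proof (cases "t = 1")
  case False
  obtain m where m: "n = Suc m" using n by (cases n) auto
  have "(\<Prod>i<n. kf (\<beta> i) t) = (\<Prod>i<n. (-1) * \<beta> i (t / (t - 1)))"
    using False by (intro prod.cong refl) (simp add: kf_def)
  also have "\<dots> = (-1) ^ n * (\<Prod>i<n. \<beta> i (t / (t - 1)))" by (subst prod.distrib) simp
  finally have "(-1) ^ (n - 1) * (\<Prod>i<n. kf (\<beta> i) t) = ((-1) ^ m * (-1) ^ Suc m) * (\<Prod>i<n. \<beta> i (t / (t - 1)))"
    using m by (simp add: mult_ac)
  also have "(-1) ^ m * (-1) ^ Suc m = (-1 :: complex)"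
    by (simp add: power_add[symmetric])
  finally show ?thesis using False by (simp add: kf_def)
next
  case True
  have z: "(\<Prod>i<n. \<beta> i 0) = 0"
    using b n by (simp add: mc_simps) 
  have lhs: "kf (\<lambda>x. \<Prod>i<n. \<beta> i x) t = 0"
    using True B z by (simp add: kf_def delta_char_def)
  have "\<exists>i<n. \<beta> i \<noteq> triv_char"
  proof (rule ccontr)
    assume "\<not> (\<exists>i<n. \<beta> i \<noteq> triv_char)"
    then have all: "\<forall>i<n. \<beta> i = triv_char" by auto
    have "(\<lambda>x. \<Prod>i<n. \<beta> i x) = triv_char"
    proof
      fix x
      have "(\<Prod>i<n. \<beta> i x) = triv_char x ^ n" using all by simp
      also have "\<dots> = triv_char x" using n by (simp add: triv_char_def)
      finally show "(\<Prod>i<n. \<beta> i x) = triv_char x" .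
    qed
    then show False using B by simp
  qed
  then obtain i where i: "i < n" "\<beta> i \<noteq> triv_char" by blast
  have "kf (\<beta> i) t = 0" using True i(2) b i(1) by (simp add: kf_def delta_char_def mc_simps)
  then have "(\<Prod>i<n. kf (\<beta> i) t) = 0" using i(1) by (intro prod_zero) auto
  then show ?thesis using lhs by simp
qed

theorem lemma3p22:
  fixes \<psi> :: "'a::{finite,field} \<Rightarrow> complex"
    and \<beta> :: "nat \<Rightarrow> 'a \<Rightarrow> complex"
    and \<nu> :: "'a \<Rightarrow> complex"
    and n :: nat
  assumes "add_char \<psi>" and "\<psi> \<noteq> (\<lambda>_. 1)"
    and "n \<ge> 1"
    and "\<forall>i<n. mult_char (\<beta> i)"
    and "(\<lambda>x. \<Prod>i<n. \<beta> i x) \<noteq> triv_char"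
    and "mult_char \<nu>"
  shows "poch \<psi> (\<lambda>x. \<Prod>i<n. \<beta> i x) \<nu> / poch0 \<psi> triv_char \<nu>
       = 1 / (1 - of_nat (card (UNIV :: 'a set))) ^ (n - 1) *
         (\<Sum>\<mu> \<in> {\<mu> \<in> Pi\<^sub>E {..<n} (\<lambda>_. {\<chi>. mult_char \<chi>}). (\<lambda>x. \<Prod>i<n. \<mu> i x) = \<nu>}.
            \<Prod>i<n. poch \<psi> (\<beta> i) (\<mu> i) / poch0 \<psi> triv_char (\<mu> i))"
proof -
  let ?F = "UNIV - {0::'a}"
  let ?Q = "of_nat (card (UNIV::'a set)) - 1 :: complex"
  let ?S = "{\<mu> \<in> Pi\<^sub>E {..<n} (\<lambda>_. {\<chi>. mult_char \<chi>}). (\<lambda>x. \<Prod>i<n. \<mu> i x) = \<nu>}"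
  have mB: "mult_char (\<lambda>x. \<Prod>i<n. \<beta> i x)" using mc_prod[OF assms(4,3)] .
  have "poch \<psi> (\<lambda>x. \<Prod>i<n. \<beta> i x) \<nu> / poch0 \<psi> triv_char \<nu>
      = (\<Sum>t\<in>?F. kf (\<lambda>x. \<Prod>i<n. \<beta> i x) t * \<nu> t)"
    using T_formula[OF assms(1,2) mB assms(6)] .
  also have "\<dots> = (-1) ^ (n - 1) * (\<Sum>t\<in>?F. (\<Prod>i<n. kf (\<beta> i) t) * \<nu> t)"
    by (simp add: kf_prod[OF assms(3,4,5)] sum_distrib_left mult_ac)
  finally have L: "poch \<psi> (\<lambda>x. \<Prod>i<n. \<beta> i x) \<nu> / poch0 \<psi> triv_char \<nu>
      = (-1) ^ (n - 1) * (\<Sum>t\<in>?F. (\<Prod>i<n. kf (\<beta> i) t) * \<nu> t)" .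
  have "(\<Sum>\<mu>\<in>?S. \<Prod>i<n. poch \<psi> (\<beta> i) (\<mu> i) / poch0 \<psi> triv_char (\<mu> i))
      = (\<Sum>\<mu>\<in>?S. \<Prod>i<n. \<Sum>t\<in>?F. kf (\<beta> i) t * \<mu> i t)"
  proof (intro sum.cong refl prod.cong)
    fix \<mu> i assume "\<mu> \<in> ?S" "i \<in> {..<n}"
    then have "mult_char (\<mu> i)" "mult_char (\<beta> i)" using assms(4) by (auto simp: PiE_iff)
    then show "poch \<psi> (\<beta> i) (\<mu> i) / poch0 \<psi> triv_char (\<mu> i) = (\<Sum>t\<in>?F. kf (\<beta> i) t * \<mu> i t)"
      using T_formula[OF assms(1,2)] by blast
  qed
  also have "\<dots> = ?Q ^ (n - 1) * (\<Sum>t\<in>?F. (\<Prod>i<n. kf (\<beta> i) t) * \<nu> t)"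
    using conv[OF assms(3,6), of "\<lambda>i. kf (\<beta> i)"] by simp
  finally have R: "(\<Sum>\<mu>\<in>?S. \<Prod>i<n. poch \<psi> (\<beta> i) (\<mu> i) / poch0 \<psi> triv_char (\<mu> i))
      = ?Q ^ (n - 1) * (\<Sum>t\<in>?F. (\<Prod>i<n. kf (\<beta> i) t) * \<nu> t)" .
  have c: "1 / (1 - of_nat (card (UNIV :: 'a set))) ^ (n - 1) * ?Q ^ (n - 1) = ((-1) ^ (n - 1) :: complex)"
  proof -
    have "(1 - of_nat (card (UNIV :: 'a set)) :: complex) = (-1) * ?Q" by simp
    then have "(1 - of_nat (card (UNIV :: 'a set))) ^ (n - 1) = (-1) ^ (n - 1) * ?Q ^ (n - 1)"
      by (simp only: power_mult_distrib)
    then show ?thesis using Qnz[where 'a='a] by (simp add: field_simps)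
  qed
  show ?thesis unfolding L R mult.assoc[symmetric] c ..
qed


end
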